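(* The sequence $(C_n)_{n\ge1}$ is strictly increasing.
   Context: For $n\ge1$ and $\mathbf{x}=(x_1,\dots,x_n)\in(0,\infty)^n$ let $f_n(\mathbf{x})=\sum_{i=1}^n x_i+\sum_{1\le i\le j\le n}\prod_{k=i}^j \frac1{x_k}$, $A_n=\inf_{\mathbf{x}\in(0,\infty)^n} f_n(\mathbf{x})$, and $C_n=3n-A_n$. *)

theory Defs
  imports Complex_Main
begin

definition f_fun :: "nat \<Rightarrow> (nat \<Rightarrow> real) \<Rightarrow> real" where
  "f_fun n x = (\<Sum>i=1..n. x i) + (\<Sum>j=1..n. \<Sum>i=1..j. \<Prod>k=i..j. 1 / x k)"

definition A_val :: "nat \<Rightarrow> real" where
  "A_val n = (INF x \<in> {x :: nat \<Rightarrow> real. \<forall>k\<in>{1..n}. 0 < x k}. f_fun n x)"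

definition C_val :: "nat \<Rightarrow> real" where
  "C_val n = 3 * real n - A_val n"

end

theory Submission
  imports Defs "HOL-Analysis.Analysis"
begin

fun gg :: "(nat \<Rightarrow> real) \<Rightarrow> nat \<Rightarrow> real" where
  "gg x 0 = 0"
| "gg x (Suc j) = (1 + gg x j) / x (Suc j)"

fun FF :: "nat \<Rightarrow> (nat \<Rightarrow> real) \<Rightarrow> real" where
  "FF 0 b = 0"
| "FF (Suc n) b = FF n b + b (Suc n) + (1 + b n) / b (Suc n)"

definition Bset :: "nat \<Rightarrow> (nat \<Rightarrow> real) set" where
  "Bset n = {b. b 0 = 0 \<and> (\<forall>k\<in>{1..n}. 0 < b k)}"

lemma Bset_nonneg:
  assumes "b \<in> Bset n" "j \<le> n"
  shows "0 \<le> b j"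
proof (cases "j = 0")
  case True then show ?thesis using assms by (simp add: Bset_def)
next
  case False
  then have "j \<in> {1..n}" using assms by auto
  then have "0 < b j" using assms(1) unfolding Bset_def by blast
  then show ?thesis by simp
qed

lemma gg_sum: "gg x j = (\<Sum>i=1..j. \<Prod>k=i..j. 1 / x k)"
proof (induction j)
  case 0
  then show ?case by simp
next
  case (Suc j)
  have "(\<Sum>i=1..Suc j. \<Prod>k=i..Suc j. 1 / x k)
      = (\<Sum>i=1..j. \<Prod>k=i..Suc j. 1 / x k) + 1 / x (Suc j)"
    by (simp add: sum.cl_ivl_Suc)
  also have "(\<Sum>i=1..j. \<Prod>k=i..Suc j. 1 / x k) = (\<Sum>i=1..j. (\<Prod>k=i..j. 1 / x k) * (1 / x (Suc j)))"
    by (rule sum.cong) (auto simp: prod.cl_ivl_Suc)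
  also have "\<dots> = gg x j / x (Suc j)"
    by (simp add: Suc sum_divide_distrib[symmetric])
  finally show ?case by (simp add: add_divide_distrib)
qed

lemma f_fun_0: "f_fun 0 x = 0"
  by (simp add: f_fun_def)

lemma f_fun_Suc: "f_fun (Suc n) x = f_fun n x + x (Suc n) + gg x (Suc n)"
  unfolding f_fun_def gg_sum[of x "Suc n"]
  by (simp add: sum.cl_ivl_Suc)

lemma gg_pos: "\<forall>k\<in>{1..n}. 0 < x k \<Longrightarrow> j \<le> n \<Longrightarrow> 0 \<le> gg x j \<and> (1 \<le> j \<longrightarrow> 0 < gg x j)"
proof (induction j)
  case 0
  then show ?case by simp
next
  case (Suc j)
  then have "0 \<le> gg x j" "0 < x (Suc j)" by auto
  then show ?case by simp
qed

lemma f_eq_FF: "\<forall>k\<in>{1..n}. 0 < x k \<Longrightarrow> f_fun n x = FF n (gg x)"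
proof (induction n)
  case 0
  then show ?case by (simp add: f_fun_0)
next
  case (Suc n)
  have IH: "f_fun n x = FF n (gg x)" using Suc by auto
  have "0 \<le> gg x n" using gg_pos[OF Suc.prems, of n] by auto
  moreover have "0 < x (Suc n)" using Suc.prems by auto
  ultimately have "(1 + gg x n) / gg x (Suc n) = x (Suc n)" by simp
  then show ?case using IH by (simp add: f_fun_Suc)
qed

lemma FF_cong: "(\<forall>j\<le>n. b j = b' j) \<Longrightarrow> FF n b = FF n b'"
  by (induction n) auto

lemma gg_in_Bset: "\<forall>k\<in>{1..n}. 0 < x k \<Longrightarrow> gg x \<in> Bset n"
  using gg_pos[of n x] by (auto simp: Bset_def)

lemma FF_to_f:
  assumes "b \<in> Bset n"
  shows "\<exists>x. (\<forall>k\<in>{1..n}. 0 < x k) \<and> f_fun n x = FF n b"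
proof -
  define x where "x k = (1 + b (k - 1)) / b k" for k
  have nn: "0 \<le> b j" if "j \<le> n" for j
    using Bset_nonneg[OF assms that] .
  have xpos: "\<forall>k\<in>{1..n}. 0 < x k"
  proof
    fix k assume k: "k \<in> {1..n}"
    then have "0 < b k" using assms by (auto simp: Bset_def)
    moreover have "0 \<le> b (k - 1)" using nn k by auto
    ultimately show "0 < x k" by (simp add: x_def)
  qed
  have "gg x j = b j" if "j \<le> n" for j
    using that
  proof (induction j)
    case 0
    then show ?case using assms by (simp add: Bset_def)
  next
    case (Suc j)
    then have "gg x j = b j" by simp
    moreover have "0 < b (Suc j)" using assms Suc.prems by (auto simp: Bset_def)
    moreover have "0 \<le> b j" using nn Suc.prems by simp
    ultimately have "gg x (Suc j) = (1 + b j) / ((1 + b j) / b (Suc j))"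
      by (simp add: x_def)
    also have "\<dots> = b (Suc j)" using \<open>0 \<le> b j\<close> by simp
    finally show ?case .
  qed
  then have "FF n (gg x) = FF n b" by (intro FF_cong) auto
  then show ?thesis using xpos f_eq_FF[OF xpos] by auto
qed

lemma FF_mono: "m \<le> n \<Longrightarrow> b \<in> Bset n \<Longrightarrow> FF m b \<le> FF n b"
proof (induction n)
  case 0
  then show ?case by simp
next
  case (Suc n)
  have bp: "0 < b (Suc n)" using Suc.prems by (auto simp: Bset_def)
  have bn: "0 \<le> b n" using Bset_nonneg[OF Suc.prems(2)] by simp
  have "b \<in> Bset n" using Suc.prems by (auto simp: Bset_def)
  have inc: "FF n b \<le> FF (Suc n) b" using bp bn by simp
  show ?case
  proof (cases "m = Suc n")
    case True then show ?thesis by simp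
  next
    case False
    then have "FF m b \<le> FF n b" using Suc.IH Suc.prems \<open>b \<in> Bset n\<close> by auto
    then show ?thesis using inc by linarith
  qed
qed

lemma FF_nonneg: "b \<in> Bset n \<Longrightarrow> 0 \<le> FF n b"
  using FF_mono[of 0 n b] by simp

lemma FF_bounds:
  assumes "b \<in> Bset n" "j \<in> {1..n}"
  shows "b j \<le> FF n b \<and> 1 / b j \<le> FF n b"
proof -
  obtain i where i: "j = Suc i" using assms(2) by (cases j) auto
  have "b \<in> Bset j" using assms by (auto simp: Bset_def)
  have "FF j b \<le> FF n b" using FF_mono[OF _ assms(1), of j] assms(2) by auto
  moreover have "0 \<le> FF i b" using FF_nonneg[of b i] assms i by (auto simp: Bset_def)
  moreover have "0 < b j" using assms by (auto simp: Bset_def)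
  moreover have "0 \<le> b i" using Bset_nonneg[OF assms(1)] assms(2) i by simp
  moreover have "1 / b j \<le> (1 + b i) / b j" using \<open>0 < b j\<close> \<open>0 \<le> b i\<close>
    by (simp add: divide_right_mono)
  moreover have "0 \<le> (1 + b i) / b j" using \<open>0 < b j\<close> \<open>0 \<le> b i\<close> by simp
  ultimately show ?thesis unfolding i by (intro conjI; simp; linarith)
qed

lemma coord_cont [continuous_intros]: "continuous_on S (\<lambda>b::nat \<Rightarrow> real. b i)"
  by (rule continuous_on_subset[OF continuous_on_product_coordinates]) simp

lemma FF_cont: "continuous_on {b. \<forall>k\<in>{1..n}. b k \<noteq> 0} (FF n)"
proof (induction n)
  case 0
  then show ?case by (simp add: continuous_on_const)
next
  case (Suc n)
  have "continuous_on {b. \<forall>k\<in>{1..Suc n}. b k \<noteq> 0} (FF n)"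
    by (rule continuous_on_subset[OF Suc]) auto
  moreover have "continuous_on {b. \<forall>k\<in>{1..Suc n}. b k \<noteq> 0} (\<lambda>b::nat\<Rightarrow>real. b (Suc n) + (1 + b n) / b (Suc n))"
    by (intro continuous_intros) auto
  ultimately have "continuous_on {b. \<forall>k\<in>{1..Suc n}. b k \<noteq> 0} (\<lambda>b. FF n b + (b (Suc n) + (1 + b n) / b (Suc n)))"
    by (rule continuous_on_add)
  then show ?case by (simp add: add.assoc)
qed

lemma FF_min_exists: "\<exists>b\<in>Bset n. \<forall>b'\<in>Bset n. FF n b \<le> FF n b'"
proof -
  define one :: "nat \<Rightarrow> real" where "one k = (if k = 0 then 0 else 1)" for k
  have one_B: "one \<in> Bset n" by (auto simp: one_def Bset_def)
  define M where "M = max (FF n one) 1"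
  have M1: "1 \<le> M" by (simp add: M_def)
  define S :: "nat \<Rightarrow> real set" where "S k = (if k \<in> {1..n} then {1/M..M} else {0})" for k
  define K where "K = PiE UNIV S"
  have Kc: "compact K"
  proof -
    have "compactin (product_topology (\<lambda>_. euclidean) UNIV) (PiE UNIV S)"
      unfolding compactin_PiE by (rule disjI2) (simp add: S_def)
    then show ?thesis unfolding K_def euclidean_product_topology by simp
  qed
  have KB: "K \<subseteq> Bset n"
  proof
    fix b assume "b \<in> K"
    then have bS: "\<And>k. b k \<in> S k" unfolding K_def by (simp add: PiE_iff)
    have "0 < 1 / M" using M1 by simp
    have "b 0 = 0" using bS[of 0] by (simp add: S_def)
    moreover have "0 < b k" if "k \<in> {1..n}" for k
    proof -
      have "1 / M \<le> b k" using bS[of k] that by (simp add: S_def)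
      then show ?thesis using \<open>0 < 1 / M\<close> by linarith
    qed
    ultimately show "b \<in> Bset n" unfolding Bset_def by blast
  qed
  define r where "r b k = (if k \<in> {1..n} then b k else 0)" for b :: "nat \<Rightarrow> real" and k
  have rFF: "FF n (r b) = FF n b" if "b \<in> Bset n" for b
    using that by (intro FF_cong) (auto simp: r_def Bset_def not_le)
  have one_K: "r one \<in> K" using M1
    unfolding K_def by (simp add: PiE_iff S_def r_def one_def)
  have Kcont: "continuous_on K (FF n)"
  proof (rule continuous_on_subset[OF FF_cont])
    show "K \<subseteq> {b. \<forall>k\<in>{1..n}. b k \<noteq> 0}"
    proof
      fix b assume "b \<in> K"
      then have "b \<in> Bset n" using KB by blast
      then show "b \<in> {b. \<forall>k\<in>{1..n}. b k \<noteq> 0}" unfolding Bset_def by auto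
    qed
  qed
  obtain bs where bs: "bs \<in> K" "\<forall>y\<in>K. FF n bs \<le> FF n y"
    using continuous_attains_inf[OF Kc _ Kcont] one_K by blast
  have "\<forall>b'\<in>Bset n. FF n bs \<le> FF n b'"
  proof
    fix b assume b: "b \<in> Bset n"
    show "FF n bs \<le> FF n b"
    proof (cases "FF n b \<le> M")
      case True
      have "r b \<in> K"
      proof -
        have "r b k \<in> S k" for k
        proof (cases "k \<in> {1..n}")
          case True
          then have "b k \<le> FF n b \<and> 1 / b k \<le> FF n b" using FF_bounds[OF b] by auto
          moreover have "0 < b k" using b True by (auto simp: Bset_def)
          ultimately have bk: "b k \<le> M" "1 / b k \<le> M" "0 < b k" using \<open>FF n b \<le> M\<close>
            by auto
          have "1 / b k * b k \<le> M * b k" using bk by (intro mult_right_mono) auto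
          then have "1 \<le> M * b k" using bk by simp
          then have "1 / M \<le> M * b k / M" using M1 by (intro divide_right_mono) auto
          then have "1 / M \<le> b k" using M1 by simp
          note bk = bk this
          then show ?thesis using True by (simp add: r_def S_def bk)
        qed (auto simp: r_def S_def)
        then show ?thesis unfolding K_def by (simp add: PiE_iff)
      qed
      then show ?thesis using bs rFF[OF b] by metis
    next
      case False
      have "FF n bs \<le> FF n (r one)" using bs one_K by blast
      also have "\<dots> = FF n one" using rFF[OF one_B] .
      also have "\<dots> \<le> M" by (simp add: M_def)
      finally show ?thesis using False by linarith
    qed
  qed
  then show ?thesis using bs KB by blast
qed

definition ins :: "nat \<Rightarrow> real \<Rightarrow> (nat \<Rightarrow> real) \<Rightarrow> nat \<Rightarrow> real" where
  "ins k s b = (\<lambda>j. if j < k then b j else if j = k then s else b (j - 1))"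

lemma ins_app: "FF (Suc n) (ins (Suc n) s b) = FF n b + s + (1 + b n) / s"
proof -
  have "FF n (ins (Suc n) s b) = FF n b" by (intro FF_cong) (auto simp: ins_def)
  then show ?thesis by (simp add: ins_def)
qed

lemma ins_mid:
  assumes "1 \<le> k" "k \<le> n"
  shows "FF (Suc n) (ins k s b) = FF n b + s + (1 + b (k - 1)) / s + (s - b (k - 1)) / b k"
  using assms(2)
proof (induction n rule: dec_induct)
  case base
  obtain k' where k': "k = Suc k'" using assms(1) by (cases k) auto
  have c: "FF k' (ins k s b) = FF k' b" by (intro FF_cong) (auto simp: ins_def k')
  have "(1 + s) / b k - (1 + b k') / b k = (s - b k') / b k" by (simp add: diff_divide_distrib add_divide_distrib)
  then show ?case using c by (simp add: k' ins_def algebra_simps)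
next
  case (step m)
  have "ins k s b (Suc (Suc m)) = b (Suc m)" "ins k s b (Suc m) = b m"
    using step by (auto simp: ins_def)
  then show ?case using step by simp
qed

lemma key_ineq:
  fixes u :: real
  assumes "0 \<le> u" "u < 1"
  shows "(3 + u) / 4 + (1 + u) / ((3 + u) / 4) + ((3 + u) / 4 - u) < 3"
proof -
  have p: "0 < 3 + u" using assms by simp
  have "0 < (1 - u)^2" using assms by simp
  then have "8 * (1 + u) < (3 + u) * (3 + u)" by (simp add: power2_eq_square algebra_simps)
  then have "4 * (1 + u) / (3 + u) < (3 + u) / 2" using p by (simp add: field_simps)
  moreover have "(1 + u) / ((3 + u) / 4) = 4 * (1 + u) / (3 + u)" by simp
  moreover have "(3 + u) / 4 + ((3 + u) / 4 - u) = 3 - (3 + u) / 2" by (simp add: field_simps)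
  ultimately show ?thesis by argo
qed

lemma step_exists:
  assumes b: "b \<in> Bset n"
  shows "\<exists>b'\<in>Bset (Suc n). FF (Suc n) b' < FF n b + 3"
proof -
  have nn: "0 \<le> b j" if "j \<le> n" for j
    using Bset_nonneg[OF b that] .
  show ?thesis
  proof (cases "\<exists>j\<in>{1..n}. 1 \<le> b j")
    case True
    define k where "k = (LEAST j. j \<in> {1..n} \<and> 1 \<le> b j)"
    have kP: "k \<in> {1..n} \<and> 1 \<le> b k" unfolding k_def using True by (metis (mono_tags, lifting) LeastI)
    have u1: "b (k - 1) < 1"
    proof (cases "k = 1")
      case True then show ?thesis using b by (simp add: Bset_def)
    next
      case False
      then have "k - 1 \<in> {1..n}" using kP by auto
      moreover have "k - 1 < k" using kP by auto
      ultimately show ?thesis using not_less_Least[of "k - 1" "\<lambda>j. j \<in> {1..n} \<and> 1 \<le> b j"]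
        unfolding k_def[symmetric] by auto
    qed
    define u where "u = b (k - 1)"
    define v where "v = b k"
    define s where "s = (3 + u) / 4"
    have "k - 1 \<le> n" using kP by auto
    then have u0: "0 \<le> u" using nn[of "k - 1"] by (simp add: u_def)
    have v1: "1 \<le> v" using kP by (simp add: v_def)
    have sp: "0 < s" using u0 by (simp add: s_def)
    have su: "0 \<le> s - u" using u1 by (simp add: s_def u_def)
    have "(s - u) / v \<le> s - u" using su v1 by (simp add: divide_le_eq mult_le_cancel_left1)
    moreover have "s + (1 + u) / s + (s - u) < 3" using key_ineq[OF u0 u1[folded u_def]] by (simp add: s_def)
    ultimately have lt: "s + (1 + u) / s + (s - u) / v < 3" by linarith
    have "FF (Suc n) (ins k s b) = FF n b + s + (1 + u) / s + (s - u) / v"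
      using ins_mid[of k n s b] kP by (simp add: u_def v_def)
    moreover have "ins k s b \<in> Bset (Suc n)"
      unfolding Bset_def
    proof (intro CollectI conjI ballI)
      show "ins k s b 0 = 0" using kP b by (simp add: ins_def Bset_def)
    next
      fix j assume j: "j \<in> {1..Suc n}"
      show "0 < ins k s b j"
      proof (cases "j < k")
        case True
        then have "j \<in> {1..n}" using j kP by auto
        then show ?thesis using True b by (simp add: ins_def Bset_def)
      next
        case False
        show ?thesis
        proof (cases "j = k")
          case True then show ?thesis using sp by (simp add: ins_def)
        next
          case False
          then have "j - 1 \<in> {1..n}" "\<not> j < k" using j kP \<open>\<not> j < k\<close> by auto
          then show ?thesis using False b by (simp add: ins_def Bset_def)
        qed
      qed
    qed
    ultimately have "FF (Suc n) (ins k s b) < FF n b + 3" "ins k s b \<in> Bset (Suc n)" using lt by linarith+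
    then show ?thesis by blast
  next
    case False
    define u where "u = b n"
    have u0: "0 \<le> u" using nn by (simp add: u_def)
    have u1: "u < 1"
    proof (cases "n = 0")
      case True then show ?thesis using b by (simp add: Bset_def u_def)
    next
      case False
      then have "n \<in> {1..n}" by auto
      then have "\<not> 1 \<le> b n" using \<open>\<not> (\<exists>j\<in>{1..n}. 1 \<le> b j)\<close> by blast
      then show ?thesis by (simp add: u_def)
    qed
    define s where "s = (3 + u) / 4"
    have sp: "0 < s" using u0 by (simp add: s_def)
    have su: "0 \<le> s - u" using u1 by (simp add: s_def)
    have "s + (1 + u) / s + (s - u) < 3" using key_ineq[OF u0 u1] by (simp add: s_def)
    then have lt: "s + (1 + u) / s < 3" using su by linarith
    have eq: "FF (Suc n) (ins (Suc n) s b) = FF n b + s + (1 + u) / s"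
      unfolding u_def by (rule ins_app)
    have mem: "ins (Suc n) s b \<in> Bset (Suc n)"
      unfolding Bset_def
    proof (intro CollectI conjI ballI)
      show "ins (Suc n) s b 0 = 0" using b by (simp add: ins_def Bset_def)
    next
      fix j assume j: "j \<in> {1..Suc n}"
      show "0 < ins (Suc n) s b j"
      proof (cases "j = Suc n")
        case True then show ?thesis using sp by (simp add: ins_def)
      next
        case False
        then have "j \<in> {1..n}" "j < Suc n" using j by auto
        then show ?thesis using b by (simp add: ins_def Bset_def)
      qed
    qed
    have "FF (Suc n) (ins (Suc n) s b) < FF n b + 3" using eq lt by linarith
    then show ?thesis using mem by blast
  qed
qed

lemma A_step: "A_val (Suc n) < A_val n + 3"
proof -
  obtain bs where bs: "bs \<in> Bset n" "\<forall>b'\<in>Bset n. FF n bs \<le> FF n b'"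
    using FF_min_exists by blast
  obtain b' where b': "b' \<in> Bset (Suc n)" "FF (Suc n) b' < FF n bs + 3"
    using step_exists[OF bs(1)] by blast
  obtain x' where x': "\<forall>k\<in>{1..Suc n}. 0 < x' k" "f_fun (Suc n) x' = FF (Suc n) b'"
    using FF_to_f[OF b'(1)] by blast
  have "A_val (Suc n) \<le> f_fun (Suc n) x'"
    unfolding A_val_def
  proof (rule cINF_lower[of "f_fun (Suc n)" "{x. \<forall>k\<in>{1..Suc n}. 0 < x k}" x'])
    show "bdd_below (f_fun (Suc n) ` {x. \<forall>k\<in>{1..Suc n}. 0 < x k})"
    proof (rule bdd_belowI[of _ 0])
      fix y assume "y \<in> f_fun (Suc n) ` {x. \<forall>k\<in>{1..Suc n}. 0 < x k}"
      then obtain x where x: "\<forall>k\<in>{1..Suc n}. 0 < x k" "y = f_fun (Suc n) x" by blast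
      have "f_fun (Suc n) x = FF (Suc n) (gg x)" by (rule f_eq_FF[OF x(1)])
      moreover have "0 \<le> FF (Suc n) (gg x)" by (rule FF_nonneg[OF gg_in_Bset[OF x(1)]])
      ultimately show "0 \<le> y" using x(2) by simp
    qed
  next
    show "x' \<in> {x. \<forall>k\<in>{1..Suc n}. 0 < x k}" using x'(1) by simp
  qed
  moreover have "FF n bs \<le> A_val n"
    unfolding A_val_def
  proof (rule cINF_greatest[of "{x. \<forall>k\<in>{1..n}. 0 < x k}" "FF n bs" "f_fun n"])
    show "{x. \<forall>k\<in>{1..n}. 0 < (x::nat \<Rightarrow> real) k} \<noteq> {}"
    proof
      assume e: "{x. \<forall>k\<in>{1..n}. 0 < (x::nat \<Rightarrow> real) k} = {}"
      have "(\<lambda>_. 1::real) \<in> {x. \<forall>k\<in>{1..n}. 0 < x k}" by simp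
      then show False by (simp only: e empty_iff)
    qed
  next
    fix x assume "x \<in> {x. \<forall>k\<in>{1..n}. 0 < (x::nat \<Rightarrow> real) k}"
    then have xp: "\<forall>k\<in>{1..n}. 0 < x k" by simp
    have "FF n bs \<le> FF n (gg x)" by (rule bs(2)[rule_format, OF gg_in_Bset[OF xp]])
    then show "FF n bs \<le> f_fun n x" using f_eq_FF[OF xp] by simp
  qed
  ultimately have "A_val (Suc n) \<le> FF (Suc n) b'" "FF n bs \<le> A_val n" using x'(2) by simp_all
  then show ?thesis using b'(2)
    by (metis (no_types, opaque_lifting) add_le_cancel_right le_less_trans order.strict_trans2)
qed

theorem proposition1:
  shows "\<forall>n\<ge>1. C_val n < C_val (Suc n)"
proof (intro allI impI)
  fix n :: nat
  obtain a a' where aa: "a = A_val n" "a' = A_val (Suc n)" by blast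
  have "a' < a + 3" using A_step[of n] aa by simp
  then have "3 * real n - a < 3 * (real n + 1) - a'" by (simp add: algebra_simps)
  then show "C_val n < C_val (Suc n)" unfolding C_val_def using aa by simp
qed

end
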